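(* Let $d\ge 1$, let $(\mathbb{E},\mathcal{E})$ be a measurable space, let $\Phi:\mathbb{R}^d\times\mathbb{E}\to\mathbb{R}^d$ be measurable and let $\varepsilon_1$ be a random element of $\mathbb{E}$. Assume the following condition holds: there exists a measurable map $\phi:\mathbb{S}^{d-1}\times\mathbb{E}\to\mathbb{R}^d$ such that for all $e\in\mathbb{E}$, $\lim_{x\to\infty}x^{-1}\Phi(x s(x),e)=\phi(s,e)$ whenever $s(x)\to s$ in $\mathbb{S}^{d-1}$; and moreover, if $\Pr(\phi(s,\varepsilon_1)=0)>0$ for some $s\in\mathbb{S}^{d-1}$, then $\Pr(\varepsilon_1\in\mathbb{W})=1$ for a measurable set $\mathbb{W}\subset\mathbb{E}$ such that for all $e\in\mathbb{W}$, $\sup_{\|y\|\le x}\|\Phi(y,e)\|=O(x)$ as $x\to\infty$. Extend $\phi$ to $\mathbb{R}^d\times\mathbb{E}$ by $\phi(v,e)=\|v\|\,\phi(v/\|v\|,e)$ for $v\neq 0$ and $\phi(0,e)=0$. Then $\lim_{x\to\infty}x^{-1}\Phi(x v(x),e)=\phi(v,e)$ whenever $v(x)\to v\in\mathbb{R}^d\setminus\{0\}$ and $e\in\mathbb{E}$. If $\Pr(\phi(s,\varepsilon_1)=0)>0$ for some $s\in\mathbb{S}^{d-1}$, then this limit relation also holds for $v(x)\to v=0$ and $e\in\mathbb{W}$.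
   Context: $\|\cdot\|$ denotes the Euclidean norm on $\mathbb{R}^d$ and $\mathbb{S}^{d-1}=\{x\in\mathbb{R}^d:\|x\|=1\}$. *)

theory Defs
  imports "HOL-Probability.Probability"
begin

definition phi_ext :: "('a::real_normed_vector \<Rightarrow> 'e \<Rightarrow> 'a) \<Rightarrow> 'a \<Rightarrow> 'e \<Rightarrow> 'a" where
  "phi_ext phi v e = (if v = 0 then 0 else norm v *\<^sub>R phi (v /\<^sub>R norm v) e)"

end

theory Submission
  imports Defs
begin

lemma part1:
  fixes f :: "'a::real_normed_vector \<Rightarrow> 'a"
  assumes lim: "\<And>s. (\<forall>x. s x \<in> sphere 0 1) \<Longrightarrow> (s \<longlongrightarrow> sz) at_top
               \<Longrightarrow> ((\<lambda>x::real. (1 / x) *\<^sub>R f (x *\<^sub>R s x)) \<longlongrightarrow> phi0) at_top"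
    and sz: "sz = v0 /\<^sub>R norm v0" and v0: "v0 \<noteq> 0" and vl: "(v \<longlongrightarrow> v0) at_top"
  shows "((\<lambda>x::real. (1 / x) *\<^sub>R f (x *\<^sub>R v x)) \<longlongrightarrow> norm v0 *\<^sub>R phi0) at_top"
proof -
  define a where "a = norm v0"
  have a: "a > 0" using v0 a_def by simp
  have s0s: "sz \<in> sphere 0 1" using sz v0 by simp
  from vl a obtain X00 where X00: "\<forall>x\<ge>X00. dist (v x) v0 < a/2"
    unfolding tendsto_iff eventually_at_top_linorder by (meson half_gt_zero)
  define X0 where "X0 = max X00 1"
  have X0: "X0 \<ge> 1" unfolding X0_def by simp
  have vb: "norm (v x) > a/2 \<and> norm (v x) < 3*a/2 \<and> v x \<noteq> 0" if "x \<ge> X0" for x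
  proof -
    have d: "norm (v x - v0) < a/2" using X00 that X0_def by (simp add: dist_norm)
    have "norm v0 \<le> norm (v x) + norm (v x - v0)" by (metis norm_minus_commute norm_triangle_sub)
    moreover have "norm (v x) \<le> norm v0 + norm (v x - v0)" by (metis add.commute norm_triangle_sub)
    ultimately show ?thesis using d a a_def by auto
  qed
  define s where "s x = (if v x = 0 then sz else v x /\<^sub>R norm (v x))" for x
  define r where "r x = x * norm (v x)" for x
  define K where "K x = (1 / r x) *\<^sub>R f (r x *\<^sub>R s x)" for x
  have ssph: "s x \<in> sphere 0 1" for x using s0s by (simp add: s_def)
  have sl: "(s \<longlongrightarrow> sz) at_top"
  proof -
    have "((\<lambda>x. inverse (norm (v x)) *\<^sub>R v x) \<longlongrightarrow> inverse (norm v0) *\<^sub>R v0) at_top"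
      by (intro tendsto_intros vl) (use v0 in simp)
    moreover have "\<forall>\<^sub>F x in at_top. inverse (norm (v x)) *\<^sub>R v x = s x"
      unfolding eventually_at_top_linorder using vb by (auto simp: s_def)
    ultimately show ?thesis using sz by (simp add: tendsto_cong)
  qed
  have Kl: "(K \<longlongrightarrow> phi0) at_top"
  proof (rule ccontr)
    assume "\<not> ?thesis"
    then obtain \<epsilon> where e: "\<epsilon> > 0" and ne: "\<not> (\<forall>\<^sub>F x in at_top. dist (K x) phi0 < \<epsilon>)"
      unfolding tendsto_iff by blast
    have fr: "\<exists>x\<ge>N. dist (K x) phi0 \<ge> \<epsilon>" for N
      using ne unfolding eventually_at_top_linorder by (meson not_less)
    define bad where "bad x = (x \<ge> X0 \<and> dist (K x) phi0 \<ge> \<epsilon>)" for x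
    define s' where "s' t = (if \<exists>x. bad x \<and> r x = t then s (SOME x. bad x \<and> r x = t) else sz)" for t
    have s'sph: "\<forall>t. s' t \<in> sphere 0 1" using ssph s0s by (simp add: s'_def)
    have s'l: "(s' \<longlongrightarrow> sz) at_top"
      unfolding tendsto_iff
    proof (intro allI impI)
      fix \<delta> :: real assume d: "\<delta> > 0"
      from sl d obtain X1 where X1: "\<forall>x\<ge>X1. dist (s x) sz < \<delta>"
        unfolding tendsto_iff eventually_at_top_linorder by blast
      have "dist (s' t) sz < \<delta>" if t: "t \<ge> 2*a*X1" for t
      proof (cases "\<exists>x. bad x \<and> r x = t")
        case True
        define x where "x = (SOME x. bad x \<and> r x = t)"
        have bx: "bad x \<and> r x = t" using someI_ex[OF True] x_def by simp
        hence xX0: "x \<ge> X0" by (simp add: bad_def)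
        have "t = x * norm (v x)" using bx r_def by simp
        also have "\<dots> \<le> x * (3*a/2)" using vb[OF xX0] xX0 X0
          by (intro mult_left_mono) auto
        also have "\<dots> < 2*a*x" using a xX0 X0 by simp
        finally have "2*a*X1 < 2*a*x" using t by simp
        hence "X1 < x" using a by simp
        thus ?thesis using X1 True x_def by (simp add: s'_def)
      next
        case False thus ?thesis using d by (simp only: s'_def if_False) simp
      qed
      thus "\<forall>\<^sub>F t in at_top. dist (s' t) sz < \<delta>"
        unfolding eventually_at_top_linorder by blast
    qed
    note Gl = lim[OF s'sph s'l]
    from Gl e obtain T where T: "\<forall>t\<ge>T. dist ((1 / t) *\<^sub>R f (t *\<^sub>R s' t)) phi0 < \<epsilon>"
      unfolding tendsto_iff eventually_at_top_linorder by blast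
    obtain x where x: "x \<ge> max X0 (2*T/a)" "dist (K x) phi0 \<ge> \<epsilon>" using fr by blast
    have xX0: "x \<ge> X0" using x by simp
    have bx: "bad x" using x by (simp add: bad_def)
    have "T = (2*T/a) * (a/2)" using a by simp
    also have "\<dots> \<le> x * (a/2)" using x a by (intro mult_right_mono) auto
    also have "\<dots> \<le> x * norm (v x)" using vb[OF xX0] xX0 X0 by (intro mult_left_mono) auto
    finally have rT: "r x \<ge> T" by (simp add: r_def)
    define t where "t = r x"
    have ex: "\<exists>y. bad y \<and> r y = t" using bx t_def by blast
    define y where "y = (SOME y. bad y \<and> r y = t)"
    have by': "bad y \<and> r y = t" using someI_ex[OF ex] y_def by simp
    have "(1 / t) *\<^sub>R f (t *\<^sub>R s' t) = K y" using by' ex y_def by (simp add: s'_def K_def)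
    hence "dist (K y) phi0 < \<epsilon>" using T rT t_def by metis
    thus False using by' bad_def by simp
  qed
  have "((\<lambda>x. norm (v x) *\<^sub>R K x) \<longlongrightarrow> norm v0 *\<^sub>R phi0) at_top"
    by (intro tendsto_intros vl Kl)
  moreover have "\<forall>\<^sub>F x in at_top. norm (v x) *\<^sub>R K x = (1 / x) *\<^sub>R f (x *\<^sub>R v x)"
    unfolding eventually_at_top_linorder
  proof (intro exI allI impI)
    fix x assume x: "x \<ge> X0"
    have nz: "v x \<noteq> 0" using vb[OF x] by simp
    have x0: "x \<noteq> 0" using x X0 by simp
    have "r x *\<^sub>R s x = x *\<^sub>R v x" using nz by (simp add: r_def s_def)
    moreover have "norm (v x) * (1 / r x) = 1 / x" using nz x0 by (simp add: r_def)
    ultimately show "norm (v x) *\<^sub>R K x = (1 / x) *\<^sub>R f (x *\<^sub>R v x)"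
      by (simp add: K_def)
  qed
  ultimately show ?thesis by (simp add: tendsto_cong)
qed

lemma part2:
  fixes f :: "'a::real_normed_vector \<Rightarrow> 'a"
  assumes bd: "\<forall>\<^sub>F x in at_top. \<forall>y. norm y \<le> x \<longrightarrow> norm (f y) \<le> C * x"
    and vl: "(v \<longlongrightarrow> 0) at_top"
  shows "((\<lambda>x::real. (1 / x) *\<^sub>R f (x *\<^sub>R v x)) \<longlongrightarrow> 0) at_top"
  unfolding tendsto_iff
proof (intro allI impI)
  fix \<epsilon> :: real assume e: "\<epsilon> > 0"
  define C' where "C' = max C 1"
  have C': "C' > 0" "C \<le> C'" unfolding C'_def by auto
  define \<delta> where "\<delta> = \<epsilon> / (2*C')"
  have d: "\<delta> > 0" using e C' by (simp add: \<delta>_def)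
  from vl d obtain X1 where X1: "\<forall>x\<ge>X1. norm (v x) < \<delta>"
    unfolding tendsto_iff eventually_at_top_linorder by auto
  from bd obtain N where N: "\<forall>x\<ge>N. \<forall>y. norm y \<le> x \<longrightarrow> norm (f y) \<le> C * x"
    unfolding eventually_at_top_linorder by blast
  have "dist ((1 / x) *\<^sub>R f (x *\<^sub>R v x)) 0 < \<epsilon>" if x: "x \<ge> max (max X1 1) (N/\<delta>)" for x
  proof -
    have x1: "x \<ge> 1" "x \<ge> X1" "x \<ge> N/\<delta>" using x by auto
    have "N \<le> \<delta> * x" using x1(3) d by (simp add: field_simps)
    moreover have "norm (x *\<^sub>R v x) \<le> \<delta> * x"
      using X1 x1 by (simp add: mult.commute mult_left_mono less_imp_le)
    ultimately have "norm (f (x *\<^sub>R v x)) \<le> C * (\<delta> * x)" using N by blast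
    also have "\<dots> \<le> C' * (\<delta> * x)" using C' d x1 by (intro mult_right_mono) auto
    finally have h: "norm (f (x *\<^sub>R v x)) \<le> C' * \<delta> * x" by simp
    have "norm ((1 / x) *\<^sub>R f (x *\<^sub>R v x)) = norm (f (x *\<^sub>R v x)) / x" using x1 by simp
    also have "\<dots> \<le> C' * \<delta>" using h x1 by (simp add: divide_le_eq)
    also have "\<dots> = \<epsilon>/2" using C' by (simp add: \<delta>_def)
    finally have "norm ((1 / x) *\<^sub>R f (x *\<^sub>R v x)) \<le> \<epsilon>/2" .
    moreover have "dist ((1 / x) *\<^sub>R f (x *\<^sub>R v x)) 0 = norm ((1 / x) *\<^sub>R f (x *\<^sub>R v x))" by simp
    ultimately show ?thesis using e by linarith
  qed
  thus "\<forall>\<^sub>F x in at_top. dist ((1 / x) *\<^sub>R f (x *\<^sub>R v x)) 0 < \<epsilon>"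
    unfolding eventually_at_top_linorder by blast
qed

theorem lemma2p3:
  fixes Phi :: "'a::euclidean_space \<Rightarrow> 'e \<Rightarrow> 'a"
    and phi :: "'a \<Rightarrow> 'e \<Rightarrow> 'a"
    and ME :: "'e measure"
    and P :: "'w measure"
    and eps :: "'w \<Rightarrow> 'e"
    and W :: "'e set"
  assumes Phi_meas: "(\<lambda>(y, e). Phi y e) \<in> (borel \<Otimes>\<^sub>M ME) \<rightarrow>\<^sub>M borel"
    and P: "prob_space P"
    and eps_meas: "eps \<in> P \<rightarrow>\<^sub>M ME"
    and phi_meas: "(\<lambda>(s, e). phi s e) \<in> (restrict_space borel (sphere 0 1) \<Otimes>\<^sub>M ME) \<rightarrow>\<^sub>M borel"
    and lim: "\<And>s0 s e. s0 \<in> sphere 0 1 \<Longrightarrow> (\<forall>x. s x \<in> sphere 0 1) \<Longrightarrow> (s \<longlongrightarrow> s0) at_top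
               \<Longrightarrow> e \<in> space ME
               \<Longrightarrow> ((\<lambda>x::real. (1 / x) *\<^sub>R Phi (x *\<^sub>R s x) e) \<longlongrightarrow> phi s0 e) at_top"
    and W_cond: "(\<exists>s\<in>sphere 0 1. measure P {\<omega>\<in>space P. phi s (eps \<omega>) = 0} > 0) \<Longrightarrow>
               W \<in> sets ME \<and> measure P {\<omega>\<in>space P. eps \<omega> \<in> W} = 1 \<and>
               (\<forall>e\<in>W. \<exists>C. \<forall>\<^sub>F x in at_top. \<forall>y. norm y \<le> x \<longrightarrow> norm (Phi y e) \<le> C * x)"
  shows "(\<forall>v0 v e. v0 \<noteq> 0 \<longrightarrow> (v \<longlongrightarrow> v0) at_top \<longrightarrow> e \<in> space ME \<longrightarrow>
            ((\<lambda>x::real. (1 / x) *\<^sub>R Phi (x *\<^sub>R v x) e) \<longlongrightarrow> phi_ext phi v0 e) at_top)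
       \<and> ((\<exists>s\<in>sphere 0 1. measure P {\<omega>\<in>space P. phi s (eps \<omega>) = 0} > 0) \<longrightarrow>
            (\<forall>v e. (v \<longlongrightarrow> 0) at_top \<longrightarrow> e \<in> W \<longrightarrow>
              ((\<lambda>x::real. (1 / x) *\<^sub>R Phi (x *\<^sub>R v x) e) \<longlongrightarrow> phi_ext phi 0 e) at_top))"
proof (intro conjI allI impI)
  fix v0 and v :: "real \<Rightarrow> 'a" and e assume v0: "v0 \<noteq> (0::'a)" and vl: "(v \<longlongrightarrow> v0) at_top" and e: "e \<in> space ME"
  have "((\<lambda>x::real. (1 / x) *\<^sub>R Phi (x *\<^sub>R v x) e) \<longlongrightarrow> norm v0 *\<^sub>R phi (v0 /\<^sub>R norm v0) e) at_top"
  proof (rule part1[where sz="v0 /\<^sub>R norm v0"])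
    fix s :: "real \<Rightarrow> 'a" assume s1: "\<forall>x. s x \<in> sphere 0 1" and s2: "(s \<longlongrightarrow> v0 /\<^sub>R norm v0) at_top"
    have sp: "v0 /\<^sub>R norm v0 \<in> sphere 0 1" using v0 by simp
    show "((\<lambda>x::real. (1 / x) *\<^sub>R Phi (x *\<^sub>R s x) e) \<longlongrightarrow> phi (v0 /\<^sub>R norm v0) e) at_top"
      by (rule lim[OF sp s1 s2 e])
  qed (simp_all add: v0 vl)
  thus "((\<lambda>x::real. (1 / x) *\<^sub>R Phi (x *\<^sub>R v x) e) \<longlongrightarrow> phi_ext phi v0 e) at_top"
    using v0 by (simp add: phi_ext_def)
next
  fix v :: "real \<Rightarrow> 'a" and e assume ex: "\<exists>s\<in>sphere 0 1. measure P {\<omega>\<in>space P. phi s (eps \<omega>) = 0} > 0"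
    and vl: "(v \<longlongrightarrow> (0::'a)) at_top" and e: "e \<in> W"
  obtain C where "\<forall>\<^sub>F x in at_top. \<forall>y. norm y \<le> x \<longrightarrow> norm (Phi y e) \<le> C * x"
    using W_cond[OF ex] e by blast
  from part2[OF this vl]
  show "((\<lambda>x::real. (1 / x) *\<^sub>R Phi (x *\<^sub>R v x) e) \<longlongrightarrow> phi_ext phi 0 e) at_top"
    by (simp add: phi_ext_def)
qed

end
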